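(* Let $n>3$ be an integer. The inverse of the circulant matrix $\mathrm{circ}(3,-1,0,\ldots,0,-1)$ of order $n$ is \[[\mathrm{circ}(3,-1,0,\ldots,0,-1)]^{-1}=\mathrm{circ}(a_0,a_1,\ldots,a_{n-1}),\] where for $j=0,1,\ldots,n-1$, \[a_j=\frac{2^{n-j}}{\sqrt{5}}\left[\frac{(3-\sqrt{5})^j}{2^n-(3-\sqrt{5})^n}-\frac{(3+\sqrt{5})^j}{2^n-(3+\sqrt{5})^n}\right].\]
   Context: For $c_0,\dots,c_{k-1}$, $\mathrm{circ}(c_0,\ldots,c_{k-1})$ denotes the $k\times k$ circulant matrix whose $(i,j)$-entry is $c_{(j-i)\bmod k}$ (first row $c_0,\dots,c_{k-1}$, each subsequent row the cyclic right shift of the previous one). *)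

theory Defs
  imports Complex_Main "Jordan_Normal_Form.Matrix"
begin

definition circ :: "nat \<Rightarrow> (nat \<Rightarrow> 'a) \<Rightarrow> 'a mat" where
  "circ k c = mat k k (\<lambda>(i, j). c (nat ((int j - int i) mod int k)))"

end

theory Submission
  imports Defs
begin

lemma circ_entry:
  assumes "i < k" "j < k"
  shows "circ k c $$ (i,j) = c (nat ((int j - int i) mod int k))"
  using assms by (simp add: circ_def)

lemma conv1:
  fixes f g :: "nat \<Rightarrow> real"
  assumes n: "n > 0" and i: "i < n" and k: "k < n"
  shows "(\<Sum>j<n. f (nat ((int j - int i) mod int n)) * g (nat ((int k - int j) mod int n)))
       = (\<Sum>d<n. f d * g (nat ((int k - int i - int d) mod int n)))"
proof (rule sum.reindex_bij_witness[where i="\<lambda>d. (d + i) mod n" and j="\<lambda>j. nat ((int j - int i) mod int n)"])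
  have nn: "int (nat ((x::int) mod int n)) = x mod int n" for x using n by simp
  fix j assume j: "j \<in> {..<n}"
  have "int ((nat ((int j - int i) mod int n) + i) mod n) = ((int j - int i) mod int n + int i) mod int n"
    by (simp only: of_nat_mod of_nat_add nn)
  also have "\<dots> = (int j - int i + int i) mod int n" by (rule mod_add_left_eq)
  also have "\<dots> = int j" using j by simp
  finally show "(nat ((int j - int i) mod int n) + i) mod n = j" by simp
  show "nat ((int j - int i) mod int n) \<in> {..<n}" using n by (simp add: nat_less_iff)
  have "(int k - int i - int (nat ((int j - int i) mod int n))) mod int n = (int k - int i - (int j - int i) mod int n) mod int n"
    by (simp only: nn)
  also have "\<dots> = (int k - int i - (int j - int i)) mod int n" by (rule mod_diff_right_eq)
  also have "\<dots> = (int k - int j) mod int n" by simp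
  finally have e: "(int k - int i - int (nat ((int j - int i) mod int n))) mod int n = (int k - int j) mod int n" .
  show "f (nat ((int j - int i) mod int n)) * g (nat ((int k - int i - int (nat ((int j - int i) mod int n))) mod int n))
      = f (nat ((int j - int i) mod int n)) * g (nat ((int k - int j) mod int n))"
    by (simp only: e)
next
  fix d assume d: "d \<in> {..<n}"
  have "(int ((d + i) mod n) - int i) mod int n = ((int d + int i) mod int n - int i) mod int n"
    by (simp only: of_nat_mod of_nat_add)
  also have "\<dots> = (int d + int i - int i) mod int n" by (rule mod_diff_left_eq)
  also have "\<dots> = int d" using d by simp
  finally show "nat ((int ((d + i) mod n) - int i) mod int n) = d" by simp
  show "(d + i) mod n \<in> {..<n}" using n by simp
qed

lemma conv2:
  fixes f g :: "nat \<Rightarrow> real"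
  assumes n: "n > 0" and i: "i < n" and k: "k < n"
  shows "(\<Sum>j<n. g (nat ((int j - int i) mod int n)) * f (nat ((int k - int j) mod int n)))
       = (\<Sum>d<n. f d * g (nat ((int k - int i - int d) mod int n)))"
proof (rule sum.reindex_bij_witness[where i="\<lambda>d. nat ((int k - int d) mod int n)" and j="\<lambda>j. nat ((int k - int j) mod int n)"])
  have key: "nat ((int k - int (nat ((int k - int d) mod int n))) mod int n) = d" if d: "d < n" for d
  proof -
    have "(int k - int (nat ((int k - int d) mod int n))) mod int n = (int k - (int k - int d)) mod int n"
      using n by (simp add: mod_diff_right_eq)
    also have "\<dots> = int d" using d by simp
    finally show ?thesis by simp
  qed
  fix d assume d: "d \<in> {..<n}"
  show "nat ((int k - int (nat ((int k - int d) mod int n))) mod int n) = d"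
    using key d by simp
  show "nat ((int k - int d) mod int n) \<in> {..<n}" using n by (simp add: nat_less_iff)
  fix j assume j: "j \<in> {..<n}"
  show "nat ((int k - int (nat ((int k - int j) mod int n))) mod int n) = j"
    using key j by simp
  show "nat ((int k - int j) mod int n) \<in> {..<n}" using n by (simp add: nat_less_iff)
  have 2: "(int k - int i - int (nat ((int k - int j) mod int n))) mod int n = (int j - int i) mod int n"
  proof -
    have "(int k - int i - int (nat ((int k - int j) mod int n))) mod int n
       = (int k - int i - (int k - int j)) mod int n"
      using n by (simp add: mod_diff_right_eq)
    then show ?thesis by simp
  qed
  show "f (nat ((int k - int j) mod int n)) * g (nat ((int k - int i - int (nat ((int k - int j) mod int n))) mod int n))
      = g (nat ((int j - int i) mod int n)) * f (nat ((int k - int j) mod int n))"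
    using 2 by simp
qed

lemma three_sum:
  fixes h :: "nat \<Rightarrow> real"
  assumes "n > 3"
  shows "(\<Sum>d<n. (if d = 0 then 3 else if d = 1 \<or> d = n - 1 then -1 else 0) * h d)
       = 3 * h 0 - h 1 - h (n - 1)"
proof -
  have "(\<Sum>d<n. (if d = 0 then 3 else if d = 1 \<or> d = n - 1 then -1 else 0) * h d)
      = (\<Sum>d<n. (if d = 0 then 3 * h 0 else 0) + (if d = 1 then - h 1 else 0) + (if d = n - 1 then - h (n-1) else 0))"
    using assms by (intro sum.cong) auto
  also have "\<dots> = 3 * h 0 - h 1 - h (n - 1)"
    using assms by (simp add: sum.distrib)
  finally show ?thesis .
qed

lemma rec_step:
  fixes x :: real
  assumes "x^2 = 3*x - 1"
  shows "3 * x^(Suc p) - x^p - x^(Suc (Suc p)) = 0"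
proof -
  have "x^(Suc (Suc p)) = x^p * x^2" by (simp add: power2_eq_square)
  then show ?thesis using assms by (simp add: algebra_simps)
qed

lemma base_step:
  fixes x :: real
  assumes "x^2 = 3*x - 1" "x^n \<noteq> 1" "n \<ge> 1"
  shows "(3 - x - x^(n-1)) / (1 - x^n) = 3 - x"
proof -
  obtain m where m: "n = Suc m" using assms(3) by (cases n) auto
  have xi: "x * (3 - x) = 1" using assms(1) by (simp add: power2_eq_square algebra_simps)
  have xn: "x^n = x * x^m" using m by simp
  have nm: "n - 1 = m" using m by simp
  have "(3 - x) * x^n = (x * (3 - x)) * x^m" using xn by (simp only: mult_ac)
  also have "\<dots> = x^m" using xi by simp
  finally have "x^(n-1) = (3 - x) * x^n" using nm by simp
  then have "3 - x - x^(n-1) = (3 - x) * (1 - x^n)" by (simp add: algebra_simps)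
  moreover have "1 - x^n \<noteq> 0" using assms(2) by simp
  ultimately show ?thesis by simp
qed

lemma rs_facts:
  "((3 - sqrt 5)/2)^2 = 3*((3 - sqrt 5)/2) - 1"
  "((3 + sqrt 5)/2)^2 = 3*((3 + sqrt 5)/2) - 1"
  "0 < (3 - sqrt 5)/2" "(3 - sqrt 5)/2 < 1" "1 < (3 + sqrt 5)/2"
proof -
  have s5: "sqrt 5 ^ 2 = 5" by simp
  have l: "sqrt 5 < 3" by (rule real_less_lsqrt) auto
  have g: "1 < sqrt 5" by (rule real_less_rsqrt) auto
  show "((3 - sqrt 5)/2)^2 = 3*((3 - sqrt 5)/2) - 1"
    using s5 by (simp add: power2_eq_square field_simps)
  show "((3 + sqrt 5)/2)^2 = 3*((3 + sqrt 5)/2) - 1"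
    using s5 by (simp add: power2_eq_square field_simps)
  show "0 < (3 - sqrt 5)/2" using l by simp
  show "(3 - sqrt 5)/2 < 1" using g by simp
  have z: "0 \<le> sqrt (5::real)" by simp
  have "0 < 1 + sqrt (5::real)" by (rule add_pos_nonneg) (simp_all add: z)
  then show "1 < (3 + sqrt 5)/2" by simp
qed

lemma gen_a:
  fixes x :: real
  assumes "j \<le> n" "x^n \<noteq> 1"
  shows "(2::real)^(n-j) * (2*x)^j / (2^n - (2*x)^n) = x^j/(1-x^n)"
proof -
  have e: "(2::real)^n = 2^(n-j) * 2^j" using assms(1) by (simp add: power_add[symmetric])
  have "(2::real)^n - (2*x)^n = 2^n * (1 - x^n)" by (simp add: power_mult_distrib algebra_simps)
  moreover have "(1 - x^n) \<noteq> 0" using assms(2) by simp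
  ultimately show ?thesis by (simp add: e power_mult_distrib field_simps)
qed

lemma mod_pm1:
  fixes q n :: int
  assumes "0 \<le> q" "q < n"
  shows "(q - 1) mod n = (if q = 0 then n - 1 else q - 1)"
    and "(q + 1) mod n = (if q = n - 1 then 0 else q + 1)"
proof -
  show "(q - 1) mod n = (if q = 0 then n - 1 else q - 1)"
  proof (cases "q = 0")
    case True
    have "(-1) mod n = (n mod n - 1) mod n" by simp
    also have "\<dots> = (n - 1) mod n" by (rule mod_diff_left_eq)
    also have "\<dots> = n - 1" using assms True by (intro mod_pos_pos_trivial) auto
    finally have "(-1) mod n = n - 1" .
    then show ?thesis using True by simp
  next
    case False then show ?thesis using assms by (simp add: mod_pos_pos_trivial)
  qed
  show "(q + 1) mod n = (if q = n - 1 then 0 else q + 1)"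
  proof (cases "q = n - 1")
    case True then show ?thesis by simp
  next
    case False then show ?thesis using assms by (simp add: mod_pos_pos_trivial)
  qed
qed

lemma lin3:
  fixes xa xb xc ya yb yc D E c :: real
  shows "3*((xb/D - yb/E)/c) - (xa/D - ya/E)/c - (xc/D-yc/E)/c = ((3*xb - xa - xc)/D - (3*yb-ya-yc)/E)/c"
  by (simp add: divide_inverse algebra_simps)

lemma F_props:
  fixes n :: nat and r s :: real and F :: "nat \<Rightarrow> real"
  assumes n: "n > 3" and r: "r = (3 - sqrt 5)/2" and s: "s = (3 + sqrt 5)/2"
    and F: "F = (\<lambda>j. (r^j/(1-r^n) - s^j/(1-s^n))/sqrt 5)"
  shows "F n = F 0" "\<And>p. 3*F(Suc p) - F p - F(Suc(Suc p)) = 0" "3*F 0 - F 1 - F(n-1) = 1"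
    "r^n \<noteq> 1" "s^n \<noteq> 1"
proof -
  have r2: "r^2 = 3*r - 1" using rs_facts(1) unfolding r .
  have s2: "s^2 = 3*s - 1" using rs_facts(2) unfolding s .
  have r0: "0 < r" "r < 1" using rs_facts(3,4) unfolding r by auto
  have "r^n < 1" using r0 n by (simp add: power_less_one_iff)
  then show rn: "r^n \<noteq> 1" by simp
  have s1: "1 < s" using rs_facts(5) unfolding s .
  have "1 < s^n" using s1 n by simp
  then show sn: "s^n \<noteq> 1" by simp
  have rn': "1 - r^n \<noteq> 0" and sn': "1 - s^n \<noteq> 0" using rn sn by auto
  have s5: "sqrt 5 \<noteq> 0" by simp
  have e1: "r^n/(1-r^n) = 1/(1-r^n) - 1" using rn' by (simp add: field_simps)
  have e2: "s^n/(1-s^n) = 1/(1-s^n) - 1" using sn' by (simp add: field_simps)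
  show "F n = F 0" unfolding F using e1 e2 by simp
  fix p
  have "3*F(Suc p) - F p - F(Suc(Suc p)) = ((3*r^Suc p - r^p - r^Suc (Suc p))/(1-r^n) - (3*s^Suc p - s^p - s^Suc (Suc p))/(1-s^n))/sqrt 5"
    unfolding F by (rule lin3)
  also have "\<dots> = 0" using rec_step[OF r2, of p] rec_step[OF s2, of p] by simp
  finally show "3*F(Suc p) - F p - F(Suc(Suc p)) = 0" .
  have "3*F 0 - F 1 - F(n-1) = ((3 - r - r^(n-1))/(1-r^n) - (3 - s - s^(n-1))/(1-s^n))/sqrt 5"
    unfolding F using lin3[where xb=1 and xa=r and xc="r^(n-1)" and D="1 - r^n" and yb=1 and ya=s and yc="s^(n-1)" and E="1 - s^n" and c="sqrt 5"] by simp
  also have "\<dots> = ((3 - r) - (3 - s))/sqrt 5"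
    using base_step[OF r2 rn] base_step[OF s2 sn] n by simp
  also have "\<dots> = 1" using r s s5 by simp
  finally show "3*F 0 - F 1 - F(n-1) = 1" .
qed

lemma periodic:
  fixes a F :: "nat \<Rightarrow> real" and n :: nat and m :: int
  assumes n: "n > 3" and aF: "\<And>j. j < n \<Longrightarrow> a j = F j" and Fn: "F n = F 0"
    and rec: "\<And>p. 3*F(Suc p) - F p - F(Suc(Suc p)) = 0" and base: "3*F 0 - F 1 - F(n-1) = 1"
  shows "3 * a (nat (m mod int n)) - a (nat ((m - 1) mod int n)) - a (nat ((m - int (n - 1)) mod int n))
         = (if m mod int n = 0 then 1 else 0)"
proof -
  define q where "q = m mod int n"
  have q0: "0 \<le> q" "q < int n" using n unfolding q_def by auto
  have m1: "(m - 1) mod int n = (if q = 0 then int n - 1 else q - 1)"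
  proof -
    have "(m - 1) mod int n = (q - 1) mod int n" unfolding q_def by (rule mod_diff_left_eq[symmetric])
    then show ?thesis using mod_pm1(1)[OF q0] by simp
  qed
  have e: "m - int (n - 1) = (m + 1) - int n" using n by (simp add: of_nat_diff)
  have "(m - int (n - 1)) mod int n = ((m + 1) - int n) mod int n" unfolding e ..
  also have "\<dots> = (m + 1) mod int n" by simp
  also have "\<dots> = (q + 1) mod int n" unfolding q_def by (rule mod_add_left_eq[symmetric])
  also have "\<dots> = (if q = int n - 1 then 0 else q + 1)" using mod_pm1(2)[OF q0] .
  finally have p1: "(m - int (n - 1)) mod int n = (if q = int n - 1 then 0 else q + 1)" .
  define Q where "Q = nat q"
  have qQ: "q = int Q" using q0 unfolding Q_def by simp
  have Qn: "Q < n" using q0 qQ by simp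
  have hm: "nat (m mod int n) = Q" unfolding Q_def q_def ..
  have hz: "(m mod int n = 0) = (Q = 0)" using qQ unfolding q_def by simp
  show ?thesis
  proof (cases "Q = 0")
    case True
    have A1: "nat ((m - 1) mod int n) = n - 1" using m1 True qQ n by simp
    have A2: "nat ((m - int (n - 1)) mod int n) = 1" using p1 True qQ n by simp
    have "3 * a Q - a (n - 1) - a 1 = 1" using True aF[of 0] aF[of 1] aF[of "n-1"] n base by simp
    then show ?thesis unfolding hm A1 A2 hz using True by simp
  next
    case False
    note F0 = False
    show ?thesis
    proof (cases "Q = n - 1")
      case True
      have A1: "nat ((m - 1) mod int n) = n - 2" using m1 True F0 qQ n by simp
      have A2: "nat ((m - int (n - 1)) mod int n) = 0" using p1 True qQ n by simp
      have e1: "Suc (n-2) = n-1" and e2: "Suc (Suc (n-2)) = n" using n by auto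
      have "3*F(Suc (n-2)) - F (n-2) - F(Suc(Suc (n-2))) = 0" by (rule rec)
      moreover have e3: "Suc (n-1) = n" using n by auto
      ultimately have R: "3*F(n-1) - F (n-2) - F n = 0" unfolding e1 e3 by simp
      have "3 * a Q - a (n - 2) - a 0 = 0" using True aF[of 0] aF[of "n-2"] aF[of "n-1"] n Fn R by simp
      then show ?thesis unfolding hm A1 A2 hz using F0 by simp
    next
      case False
      have A1: "nat ((m - 1) mod int n) = Q - 1" using m1 False F0 qQ n by simp
      have hq: "q \<noteq> int n - 1" using False qQ n by linarith
      have A2: "nat ((m - int (n - 1)) mod int n) = Q + 1" using p1 hq qQ by simp
      have e1: "Suc (Q-1) = Q" and e2: "Suc (Suc (Q-1)) = Q + 1" using F0 by auto
      have "3*F(Suc (Q-1)) - F (Q-1) - F(Suc(Suc (Q-1))) = 0" by (rule rec)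
      then have R: "3*F Q - F (Q - 1) - F (Q+1) = 0" unfolding e1 by simp
      have Q1: "Q + 1 < n" using False Qn by simp
      have "3 * a Q - a (Q - 1) - a (Q + 1) = 0" using aF[of Q] aF[of "Q-1"] aF[of "Q+1"] Qn Q1 R by simp
      then show ?thesis unfolding hm A1 A2 hz using F0 by simp
    qed
  qed
qed


lemma entry_sum:
  fixes A B :: "real mat"
  assumes "A \<in> carrier_mat n n" "B \<in> carrier_mat n n" "i < n" "k < n"
  shows "(A * B) $$ (i,k) = (\<Sum>j<n. A $$ (i,j) * B $$ (j,k))"
  using assms by (simp add: scalar_prod_def lessThan_atLeast0)

theorem mainTheorem7:
  fixes n :: nat
  assumes "n > 3"
  defines "A \<equiv> circ n (\<lambda>j. if j = 0 then (3::real) else if j = 1 \<or> j = n - 1 then -1 else 0)"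
      and "a \<equiv> (\<lambda>j. 2 ^ (n - j) / sqrt 5 *
                 ((3 - sqrt 5) ^ j / (2 ^ n - (3 - sqrt 5) ^ n)
                  - (3 + sqrt 5) ^ j / (2 ^ n - (3 + sqrt 5) ^ n)))"
  shows "A * circ n a = 1\<^sub>m n \<and> circ n a * A = 1\<^sub>m n"
proof -
  have n: "n > 3" by fact
  have n0: "n > 0" using n by simp
  define cf :: "nat \<Rightarrow> real" where "cf = (\<lambda>j. if j = 0 then (3::real) else if j = 1 \<or> j = n - 1 then -1 else 0)"
  define r :: real where "r = (3 - sqrt 5)/2"
  define s :: real where "s = (3 + sqrt 5)/2"
  define F where "F = (\<lambda>j. (r^j/(1-r^n) - s^j/(1-s^n))/sqrt 5)"
  note Fp = F_props[OF n r_def s_def F_def]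
  have aF: "a j = F j" if j: "j < n" for j
  proof -
    have r2: "3 - sqrt 5 = 2 * r" and s2: "3 + sqrt 5 = 2 * s" unfolding r_def s_def by simp_all
    have "a j = (2^(n-j) * (2*r)^j / (2^n - (2*r)^n) - 2^(n-j) * (2*s)^j / (2^n - (2*s)^n)) / sqrt 5"
      unfolding a_def r2 s2 by (simp add: divide_inverse algebra_simps)
    also have "\<dots> = F j" unfolding F_def using gen_a[of j n r] gen_a[of j n s] j Fp(4,5) by simp
    finally show ?thesis .
  qed
  have key: "3 * a (nat (m mod int n)) - a (nat ((m - 1) mod int n)) - a (nat ((m - int (n - 1)) mod int n))
         = (if m mod int n = 0 then 1 else 0)" for m
    by (rule periodic[OF n aF Fp(1) Fp(2) Fp(3)])
  have ent: "(\<Sum>d<n. cf d * a (nat ((int k - int i - int d) mod int n))) = (if i = k then 1 else 0)"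
    if ik: "i < n" "k < n" for i k
  proof -
    have "(\<Sum>d<n. cf d * a (nat ((int k - int i - int d) mod int n)))
        = 3 * a (nat ((int k - int i - int 0) mod int n)) - a (nat ((int k - int i - int 1) mod int n))
          - a (nat ((int k - int i - int (n - 1)) mod int n))"
      unfolding cf_def by (rule three_sum[OF n])
    also have "\<dots> = (if (int k - int i) mod int n = 0 then 1 else 0)" using key[of "int k - int i"] by simp
    also have "\<dots> = (if i = k then 1 else 0)"
    proof -
      have "((int k - int i) mod int n = 0) = (i = k)"
      proof
        assume h: "(int k - int i) mod int n = 0"
        then have "int n dvd (int k - int i)" by (simp add: dvd_eq_mod_eq_0)
        then obtain t where t: "int k - int i = int n * t" by (auto elim: dvdE)
        have "t = 0"
        proof (rule ccontr)
          assume "t \<noteq> 0"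
          then have "1 \<le> \<bar>t\<bar>" by simp
          then have "int n * 1 \<le> int n * \<bar>t\<bar>" by (intro mult_left_mono) auto
          then have "\<bar>int n * t\<bar> \<ge> int n" by (simp add: abs_mult)
          then show False using t ik by linarith
        qed
        then show "i = k" using t by simp
      qed simp
      then show ?thesis by simp
    qed
    finally show ?thesis .
  qed
  have Ac: "A \<in> carrier_mat n n" and Cc: "circ n a \<in> carrier_mat n n" unfolding A_def circ_def by auto
  have AE: "A $$ (i,j) = cf (nat ((int j - int i) mod int n))" if "i < n" "j < n" for i j
    using that unfolding A_def cf_def circ_def by simp
  have CE: "circ n a $$ (i,j) = a (nat ((int j - int i) mod int n))" if "i < n" "j < n" for i j
    using that unfolding circ_def by simp
  have "A * circ n a = 1\<^sub>m n"
  proof (rule eq_matI)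
    fix i k assume ik: "i < dim_row (1\<^sub>m n)" "k < dim_col (1\<^sub>m n)"
    then have ik': "i < n" "k < n" by auto
    have "(A * circ n a) $$ (i,k) = (\<Sum>j<n. A $$ (i,j) * circ n a $$ (j,k))"
      by (rule entry_sum[OF Ac Cc ik'])
    also have "\<dots> = (\<Sum>j<n. cf (nat ((int j - int i) mod int n)) * a (nat ((int k - int j) mod int n)))"
      using ik' by (intro sum.cong) (simp_all add: AE CE)
    also have "\<dots> = (\<Sum>d<n. cf d * a (nat ((int k - int i - int d) mod int n)))"
      by (rule conv1[OF n0 ik'])
    also have "\<dots> = 1\<^sub>m n $$ (i,k)" using ent[OF ik'] ik' by simp
    finally show "(A * circ n a) $$ (i,k) = 1\<^sub>m n $$ (i,k)" .
  qed (use Ac Cc in auto)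
  moreover have "circ n a * A = 1\<^sub>m n"
  proof (rule eq_matI)
    fix i k assume ik: "i < dim_row (1\<^sub>m n)" "k < dim_col (1\<^sub>m n)"
    then have ik': "i < n" "k < n" by auto
    have "(circ n a * A) $$ (i,k) = (\<Sum>j<n. circ n a $$ (i,j) * A $$ (j,k))"
      by (rule entry_sum[OF Cc Ac ik'])
    also have "\<dots> = (\<Sum>j<n. a (nat ((int j - int i) mod int n)) * cf (nat ((int k - int j) mod int n)))"
      using ik' by (intro sum.cong) (simp_all add: AE CE)
    also have "\<dots> = (\<Sum>d<n. cf d * a (nat ((int k - int i - int d) mod int n)))"
      by (rule conv2[OF n0 ik'])
    also have "\<dots> = 1\<^sub>m n $$ (i,k)" using ent[OF ik'] ik' by simp
    finally show "(circ n a * A) $$ (i,k) = 1\<^sub>m n $$ (i,k)" .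
  qed (use Ac Cc in auto)
  ultimately show ?thesis by simp
qed

end
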